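(* For every positive integer $n$, $\mathsf{pf}_n(132)=\mathsf{pf}_n(231)$ and $\mathsf{pf}_n(213)=\mathsf{pf}_n(312)$.
   Context: $[n]=\{1,\dots,n\}$. A tuple $p=(p_1,\dots,p_n)\in[n]^n$ is a parking function if its weakly increasing rearrangement $(p'_1,\dots,p'_n)$ satisfies $p'_i\le i$ for all $i$. To a parking function $p$ associate the permutation $\pi(p)$ obtained by listing, for $s=1,\dots,n$ in turn, the indices $j$ with $p_j=s$ in increasing order, and concatenating. A permutation $\pi$ avoids $\sigma\in\mathfrak S_3$ if no length-3 subsequence of $\pi$ is order-isomorphic to $\sigma$. $\mathsf{pf}_n(\sigma)$ is the number of parking functions $p$ of length $n$ with $\pi(p)$ avoiding $\sigma$. *)

theory Defs
  imports Main
begin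

(* A tuple p = (p_1,...,p_n) in [n]^n is represented as a list p of length n,
   with p_j = p ! (j - 1). *)

definition is_parking_function :: "nat \<Rightarrow> nat list \<Rightarrow> bool" where
  "is_parking_function n p \<longleftrightarrow>
     length p = n \<and> set p \<subseteq> {1..n} \<and>
     (\<forall>i\<in>{1..n}. sort p ! (i - 1) \<le> i)"

definition pf_perm :: "nat list \<Rightarrow> nat list" where
  "pf_perm p = concat (map (\<lambda>s. filter (\<lambda>j. p ! (j - 1) = s) [1..<length p + 1])
                            [1..<length p + 1])"

definition contains3 :: "nat list \<Rightarrow> nat list \<Rightarrow> bool" where
  "contains3 w \<sigma> \<longleftrightarrow>
     (\<exists>i j k. i < j \<and> j < k \<and> k < length w \<and>
        (let t = [w ! i, w ! j, w ! k] in
          \<forall>a<3. \<forall>b<3. (t ! a < t ! b \<longleftrightarrow> \<sigma> ! a < \<sigma> ! b)))"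

definition avoids :: "nat list \<Rightarrow> nat list \<Rightarrow> bool" where
  "avoids w \<sigma> \<longleftrightarrow> \<not> contains3 w \<sigma>"

definition pf_count :: "nat \<Rightarrow> nat list \<Rightarrow> nat" where
  "pf_count n \<sigma> = card {p. is_parking_function n p \<and> avoids (pf_perm p) \<sigma>}"

end

theory Submission
  imports Defs "HOL-Library.Multiset" "HOL-Library.Product_Lexorder"
begin


definition P132 :: "nat list \<Rightarrow> bool" where
 "P132 w \<longleftrightarrow> (\<exists>i j k. i < j \<and> j < k \<and> k < length w \<and> w!i < w!k \<and> w!k < w!j)"
definition P231 :: "nat list \<Rightarrow> bool" where
 "P231 w \<longleftrightarrow> (\<exists>i j k. i < j \<and> j < k \<and> k < length w \<and> w!k < w!i \<and> w!i < w!j)"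
definition P213 :: "nat list \<Rightarrow> bool" where
 "P213 w \<longleftrightarrow> (\<exists>i j k. i < j \<and> j < k \<and> k < length w \<and> w!j < w!i \<and> w!i < w!k)"
definition P312 :: "nat list \<Rightarrow> bool" where
 "P312 w \<longleftrightarrow> (\<exists>i j k. i < j \<and> j < k \<and> k < length w \<and> w!j < w!k \<and> w!k < w!i)"

lemma all3: "(\<forall>a<(3::nat). P a) \<longleftrightarrow> P 0 \<and> P 1 \<and> P 2"
  by (auto simp: numeral_3_eq_3 numeral_2_eq_2 less_Suc_eq)

lemma c132: "contains3 w [1,3,2] \<longleftrightarrow> P132 w"
  unfolding contains3_def P132_def Let_def all3 apply (rule iffI) apply auto[1] apply (elim exE conjE) subgoal for i j k by (rule exI[of _ i], rule exI[of _ j], auto) done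
lemma c231: "contains3 w [2,3,1] \<longleftrightarrow> P231 w"
  unfolding contains3_def P231_def Let_def all3 apply (rule iffI) apply auto[1] apply (elim exE conjE) subgoal for i j k by (rule exI[of _ i], rule exI[of _ j], auto) done
lemma c213: "contains3 w [2,1,3] \<longleftrightarrow> P213 w"
  unfolding contains3_def P213_def Let_def all3 apply (rule iffI) apply auto[1] apply (elim exE conjE) subgoal for i j k by (rule exI[of _ i], rule exI[of _ j], auto) done
lemma c312: "contains3 w [3,1,2] \<longleftrightarrow> P312 w"
  unfolding contains3_def P312_def Let_def all3 apply (rule iffI) apply auto[1] apply (elim exE conjE) subgoal for i j k by (rule exI[of _ i], rule exI[of _ j], auto) done


lemma map_ord3:
  assumes "\<forall>x\<in>set w. \<forall>y\<in>set w. (h x < h y) = R x y" "i < j" "j < k" "k < length w"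
  shows "(map h w ! i < map h w ! j) = R (w!i) (w!j) \<and> (map h w ! j < map h w ! i) = R (w!j) (w!i)
       \<and> (map h w ! i < map h w ! k) = R (w!i) (w!k) \<and> (map h w ! k < map h w ! i) = R (w!k) (w!i)
       \<and> (map h w ! j < map h w ! k) = R (w!j) (w!k) \<and> (map h w ! k < map h w ! j) = R (w!k) (w!j)"
  using assms by auto

lemma P132_map:
  assumes "\<forall>x\<in>set w. \<forall>y\<in>set w. (h x < h y) = (x < y)"
  shows "P132 (map h w) = P132 w"
  unfolding P132_def P132_def length_map
  apply (rule iffI; elim exE conjE)
  subgoal for i j k using map_ord3[OF assms, of i j k] by (intro exI[of _ i] exI[of _ j] exI[of _ k]) simp
  subgoal for i j k using map_ord3[OF assms, of i j k] by (intro exI[of _ i] exI[of _ j] exI[of _ k]) simp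
  done

lemma P231_map:
  assumes "\<forall>x\<in>set w. \<forall>y\<in>set w. (h x < h y) = (x < y)"
  shows "P231 (map h w) = P231 w"
  unfolding P231_def P231_def length_map
  apply (rule iffI; elim exE conjE)
  subgoal for i j k using map_ord3[OF assms, of i j k] by (intro exI[of _ i] exI[of _ j] exI[of _ k]) simp
  subgoal for i j k using map_ord3[OF assms, of i j k] by (intro exI[of _ i] exI[of _ j] exI[of _ k]) simp
  done

lemma P231_rev:
  assumes "\<forall>x\<in>set w. \<forall>y\<in>set w. (h x < h y) = (y < x)"
  shows "P231 (map h w) = P213 w"
  unfolding P231_def P213_def length_map
  apply (rule iffI; elim exE conjE)
  subgoal for i j k using map_ord3[OF assms, of i j k] by (intro exI[of _ i] exI[of _ j] exI[of _ k]) simp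
  subgoal for i j k using map_ord3[OF assms, of i j k] by (intro exI[of _ i] exI[of _ j] exI[of _ k]) simp
  done

lemma P312_rev:
  assumes "\<forall>x\<in>set w. \<forall>y\<in>set w. (h x < h y) = (y < x)"
  shows "P312 (map h w) = P132 w"
  unfolding P312_def P132_def length_map
  apply (rule iffI; elim exE conjE)
  subgoal for i j k using map_ord3[OF assms, of i j k] by (intro exI[of _ i] exI[of _ j] exI[of _ k]) simp
  subgoal for i j k using map_ord3[OF assms, of i j k] by (intro exI[of _ i] exI[of _ j] exI[of _ k]) simp
  done

lemma nth_split1: "t < length xs \<Longrightarrow> (xs@m#ys)!t = xs!t"
  by (simp add: nth_append)
lemma nth_split2: "(xs@m#ys)!(length xs) = m"
  by (simp add: nth_append)
lemma nth_split3: "length xs < t \<Longrightarrow> (xs@m#ys)!t = ys!(t - length xs - 1)"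
  by (simp add: nth_append nth_Cons')

lemma S132:
  assumes X: "\<forall>x\<in>set xs. x < m" and Y: "\<forall>y\<in>set ys. y < m"
  shows "P132 (xs @ m # ys) \<longleftrightarrow> P132 xs \<or> P132 ys \<or> (\<exists>a\<in>set xs. \<exists>b\<in>set ys. a < b)"
proof
  let ?z = "xs @ m # ys"
  assume "P132 ?z"
  then obtain i j k where h: "i<j" "j<k" "k < length ?z" "?z!i < ?z!k" "?z!k < ?z!j"
    unfolding P132_def by blast
  consider "k < length xs" | "k = length xs" | "k > length xs" by linarith
  then show "P132 xs \<or> P132 ys \<or> (\<exists>a\<in>set xs. \<exists>b\<in>set ys. a < b)"
  proof cases
    case 1
    then have "xs!i < xs!k \<and> xs!k < xs!j" using h by (simp add: nth_split1)
    then have "P132 xs" unfolding P132_def using h 1 by blast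
    then show ?thesis by simp
  next
    case 2
    then have "?z!k = m" by (simp add: nth_split2)
    moreover have "?z!j = xs!j" using h 2 by (simp add: nth_split1)
    moreover have "xs!j < m" using X h 2 by simp
    ultimately show ?thesis using h by simp
  next
    case 3
    have zk: "?z!k = ys!(k - length xs - 1)" using 3 by (simp add: nth_split3)
    have kl: "k - length xs - 1 < length ys" using h 3 by simp
    consider "i < length xs" | "i = length xs" | "i > length xs" by linarith
    then show ?thesis
    proof cases
      case 1
      then have "?z!i = xs!i" by (simp add: nth_split1)
      then show ?thesis using h zk kl 1 by (metis nth_mem)
    next
      case 2
      then have "?z!i = m" by (simp add: nth_split2)
      then show ?thesis using h zk kl Y by (metis nth_mem not_less_iff_gr_or_eq)
    next
      case i3: 3
      have "?z!i = ys!(i - length xs - 1)" using i3 by (simp add: nth_split3)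
      moreover have "?z!j = ys!(j - length xs - 1)" using i3 h by (simp add: nth_split3)
      moreover have "i - length xs - 1 < j - length xs - 1" "j - length xs - 1 < k - length xs - 1"
        using i3 h by auto
      ultimately have "P132 ys" unfolding P132_def using h zk kl by metis
      then show ?thesis by simp
    qed
  qed
next
  let ?z = "xs @ m # ys"
  assume "P132 xs \<or> P132 ys \<or> (\<exists>a\<in>set xs. \<exists>b\<in>set ys. a < b)"
  then consider "P132 xs" | "P132 ys" | "\<exists>a\<in>set xs. \<exists>b\<in>set ys. a < b" by blast
  then show "P132 ?z"
  proof cases
    case 1
    then obtain i j k where h: "i<j" "j<k" "k < length xs" "xs!i < xs!k" "xs!k < xs!j"
      unfolding P132_def by blast
    then show ?thesis unfolding P132_def
      by (intro exI[of _ i] exI[of _ j] exI[of _ k]) (simp add: nth_split1)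
  next
    case 2
    then obtain i j k where h: "i<j" "j<k" "k < length ys" "ys!i < ys!k" "ys!k < ys!j"
      unfolding P132_def by blast
    let ?s = "Suc (length xs)"
    show ?thesis unfolding P132_def
      by (intro exI[of _ "i + ?s"] exI[of _ "j + ?s"] exI[of _ "k + ?s"]) (simp add: nth_split3 h)
  next
    case 3
    then obtain i k where h: "i < length xs" "k < length ys" "xs!i < ys!k"
      by (metis in_set_conv_nth)
    have "ys!k < m" using Y h by simp
    then show ?thesis unfolding P132_def using h
      by (intro exI[of _ i] exI[of _ "length xs"] exI[of _ "k + Suc (length xs)"])
         (simp add: nth_split1 nth_split2 nth_split3)
  qed
qed


lemma S231:
  assumes X: "\<forall>x\<in>set xs. x < m" and Y: "\<forall>y\<in>set ys. y < m"
  shows "P231 (xs @ m # ys) \<longleftrightarrow> P231 xs \<or> P231 ys \<or> (\<exists>a\<in>set xs. \<exists>b\<in>set ys. b < a)"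
proof
  let ?z = "xs @ m # ys"
  assume "P231 ?z"
  then obtain i j k where h: "i<j" "j<k" "k < length ?z" "?z!k < ?z!i" "?z!i < ?z!j"
    unfolding P231_def by blast
  consider "k < length xs" | "k = length xs" | "k > length xs" by linarith
  then show "P231 xs \<or> P231 ys \<or> (\<exists>a\<in>set xs. \<exists>b\<in>set ys. b < a)"
  proof cases
    case 1
    then have "xs!k < xs!i \<and> xs!i < xs!j" using h by (simp add: nth_split1)
    then have "P231 xs" unfolding P231_def using h 1 by blast
    then show ?thesis by simp
  next
    case 2
    then have "?z!k = m" by (simp add: nth_split2)
    moreover have "?z!i = xs!i" using h 2 by (simp add: nth_split1)
    moreover have "xs!i < m" using X h 2 by simp
    ultimately show ?thesis using h by simp
  next
    case 3
    have zk: "?z!k = ys!(k - length xs - 1)" using 3 by (simp add: nth_split3)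
    have kl: "k - length xs - 1 < length ys" using h 3 by simp
    consider "i < length xs" | "i = length xs" | "i > length xs" by linarith
    then show ?thesis
    proof cases
      case 1
      then have "?z!i = xs!i" by (simp add: nth_split1)
      then show ?thesis using h zk kl 1 by (metis nth_mem)
    next
      case 2
      then have "?z!i = m" by (simp add: nth_split2)
      moreover have "?z!j = ys!(j - length xs - 1)" using 2 h by (simp add: nth_split3)
      moreover have "j - length xs - 1 < length ys" using h 2 by simp
      ultimately show ?thesis using h Y by (metis nth_mem not_less_iff_gr_or_eq)
    next
      case i3: 3
      have "?z!i = ys!(i - length xs - 1)" using i3 by (simp add: nth_split3)
      moreover have "?z!j = ys!(j - length xs - 1)" using i3 h by (simp add: nth_split3)
      moreover have "i - length xs - 1 < j - length xs - 1" "j - length xs - 1 < k - length xs - 1"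
        using i3 h by auto
      ultimately have "P231 ys" unfolding P231_def using h zk kl by metis
      then show ?thesis by simp
    qed
  qed
next
  let ?z = "xs @ m # ys"
  assume "P231 xs \<or> P231 ys \<or> (\<exists>a\<in>set xs. \<exists>b\<in>set ys. b < a)"
  then consider "P231 xs" | "P231 ys" | "\<exists>a\<in>set xs. \<exists>b\<in>set ys. b < a" by blast
  then show "P231 ?z"
  proof cases
    case 1
    then obtain i j k where h: "i<j" "j<k" "k < length xs" "xs!k < xs!i" "xs!i < xs!j"
      unfolding P231_def by blast
    then show ?thesis unfolding P231_def
      by (intro exI[of _ i] exI[of _ j] exI[of _ k]) (simp add: nth_split1)
  next
    case 2
    then obtain i j k where h: "i<j" "j<k" "k < length ys" "ys!k < ys!i" "ys!i < ys!j"
      unfolding P231_def by blast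
    let ?s = "Suc (length xs)"
    show ?thesis unfolding P231_def
      by (intro exI[of _ "i + ?s"] exI[of _ "j + ?s"] exI[of _ "k + ?s"]) (simp add: nth_split3 h)
  next
    case 3
    then obtain i k where h: "i < length xs" "k < length ys" "ys!k < xs!i"
      by (metis in_set_conv_nth)
    have "xs!i < m" using X h by simp
    then show ?thesis unfolding P231_def using h
      by (intro exI[of _ i] exI[of _ "length xs"] exI[of _ "k + Suc (length xs)"])
         (simp add: nth_split1 nth_split2 nth_split3)
  qed
qed



definition isperm :: "nat \<Rightarrow> nat list \<Rightarrow> bool" where
  "isperm n w \<longleftrightarrow> distinct w \<and> set w = {1..n}"

lemma isperm_length: "isperm n w \<Longrightarrow> length w = n"
  unfolding isperm_def by (metis card_atLeastAtMost diff_Suc_1 distinct_card)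

definition rank :: "nat set \<Rightarrow> nat \<Rightarrow> nat" where
  "rank S x = Suc (card {y\<in>S. y < x})"

definition std :: "nat list \<Rightarrow> nat list" where
  "std xs = map (rank (set xs)) xs"

lemma length_std[simp]: "length (std xs) = length xs"
  by (simp add: std_def)

lemma rank_less:
  assumes "finite S" "x \<in> S" "y \<in> S"
  shows "rank S x < rank S y \<longleftrightarrow> x < y"
proof
  assume "x < y"
  then have "{z\<in>S. z < x} \<subset> {z\<in>S. z < y}" using assms by auto
  then have "card {z\<in>S. z < x} < card {z\<in>S. z < y}"
    using assms by (intro psubset_card_mono) auto
  then show "rank S x < rank S y" by (simp add: rank_def)
next
  assume "rank S x < rank S y"
  show "x < y"
  proof (rule ccontr)
    assume "\<not> x < y"
    then have "{z\<in>S. z < y} \<subseteq> {z\<in>S. z < x}" by auto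
    then have "card {z\<in>S. z < y} \<le> card {z\<in>S. z < x}"
      using assms by (intro card_mono) auto
    then show False using \<open>rank S x < rank S y\<close> by (simp add: rank_def)
  qed
qed

lemma rank_inj: assumes "finite S" shows "inj_on (rank S) S"
proof (rule inj_onI)
  fix x y assume xy: "x \<in> S" "y \<in> S" "rank S x = rank S y"
  show "x = y" using rank_less[OF assms xy(1,2)] rank_less[OF assms xy(2,1)] xy(3)
    by (simp add: linorder_neq_iff)
qed

lemma rank_image: assumes "finite S" shows "rank S ` S = {1..card S}"
proof -
  have sub: "rank S ` S \<subseteq> {1..card S}"
  proof
    fix r assume "r \<in> rank S ` S"
    then obtain x where x: "x \<in> S" "r = rank S x" by blast
    have "{z\<in>S. z < x} \<subset> S" using x by auto
    then have "card {z\<in>S. z < x} < card S" using assms by (intro psubset_card_mono) auto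
    then show "r \<in> {1..card S}" using x by (simp add: rank_def)
  qed
  have "card (rank S ` S) = card S" using rank_inj[OF assms] by (simp add: card_image)
  then show ?thesis using sub by (intro card_subset_eq) auto
qed

lemma std_perm: "distinct xs \<Longrightarrow> isperm (length xs) (std xs)"
  unfolding isperm_def std_def
  by (simp add: distinct_map rank_inj rank_image distinct_card)

lemma std_ord: "\<forall>x\<in>set xs. \<forall>y\<in>set xs. (rank (set xs) x < rank (set xs) y) = (x < y)"
  by (simp add: rank_less)

lemma rank_shift:
  assumes "x \<in> {c+1..c+k}" shows "rank {c+1..c+k} x = x - c"
proof -
  have "{y\<in>{c+1..c+k}. y < x} = {c+1..<x}" using assms by auto
  then show ?thesis using assms by (simp add: rank_def, linarith)
qed

lemma std_shift: assumes "set xs = {c+1..c+k}" shows "std xs = map (\<lambda>x. x - c) xs"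
proof -
  have "\<forall>x\<in>set xs. rank (set xs) x = x - c" using rank_shift[of _ c k] assms by simp
  then show ?thesis unfolding std_def by simp
qed

lemma std_id: "isperm k xs \<Longrightarrow> std xs = xs"
  using std_shift[of xs 0 k] unfolding isperm_def by simp


fun asc :: "nat list \<Rightarrow> bool list" where
  "asc (x#y#zs) = (x < y) # asc (y#zs)"
| "asc _ = []"

lemma asc_append: "asc (xs @ y # ys) = asc (xs @ [y]) @ asc (y # ys)"
proof (induction xs)
  case Nil then show ?case by simp
next
  case (Cons x xs) then show ?case by (cases xs) auto
qed

lemma asc_snoc_max: "xs \<noteq> [] \<Longrightarrow> \<forall>x\<in>set xs. x < m \<Longrightarrow> asc (xs @ [m]) = asc xs @ [True]"
proof (induction xs)
  case Nil then show ?case by simp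
next
  case (Cons x xs) then show ?case by (cases xs) auto
qed

lemma asc_cons_max: "ys \<noteq> [] \<Longrightarrow> \<forall>y\<in>set ys. y < m \<Longrightarrow> asc (m # ys) = False # asc ys"
  by (cases ys) auto

lemma asc_split:
  assumes "\<forall>x\<in>set xs. x < m" "\<forall>y\<in>set ys. y < m"
  shows "asc (xs @ m # ys) = (if xs = [] then [] else asc xs @ [True]) @ (if ys = [] then [] else False # asc ys)"
proof -
  have "asc (xs @ m # ys) = asc (xs@[m]) @ asc (m#ys)" by (rule asc_append)
  also have "asc (xs@[m]) = (if xs = [] then [] else asc xs @ [True])" using assms asc_snoc_max by auto
  also have "asc (m#ys) = (if ys=[] then [] else False # asc ys)" using assms asc_cons_max by auto
  finally show ?thesis .
qed

lemma asc_map: "\<forall>x\<in>set w. \<forall>y\<in>set w. (h x < h y) = (x < y) \<Longrightarrow> asc (map h w) = asc w"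
  by (induction w rule: asc.induct) auto

lemma asc_rev: "distinct w \<Longrightarrow> \<forall>x\<in>set w. \<forall>y\<in>set w. (h x < h y) = (y < x) \<Longrightarrow> asc (map h w) = map Not (asc w)"
  by (induction w rule: asc.induct) (auto simp: less_not_sym linorder_neq_iff)

lemma asc_length: "length (asc w) = length w - 1"
  by (induction w rule: asc.induct) auto

lemma asc_nth: "Suc i < length w \<Longrightarrow> asc w ! i = (w!i < w!Suc i)"
proof (induction w arbitrary: i rule: asc.induct)
  case (1 x y zs) then show ?case by (cases i) auto
qed auto

definition lft :: "nat list \<Rightarrow> nat list" where
  "lft w = takeWhile (\<lambda>x. x \<noteq> Max (set w)) w"
definition rgt :: "nat list \<Rightarrow> nat list" where
  "rgt w = tl (dropWhile (\<lambda>x. x \<noteq> Max (set w)) w)"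

lemma split_lr: assumes "w \<noteq> []" shows "w = lft w @ Max (set w) # rgt w"
proof -
  let ?P = "\<lambda>x. x \<noteq> Max (set w)"
  have M: "Max (set w) \<in> set w" using assms by simp
  then have ne: "dropWhile ?P w \<noteq> []" by (simp add: dropWhile_eq_Nil_conv)
  then have "hd (dropWhile ?P w) = Max (set w)" using hd_dropWhile by blast
  then have "dropWhile ?P w = Max (set w) # rgt w" unfolding rgt_def using ne by (metis list.collapse)
  then show ?thesis unfolding lft_def by (metis takeWhile_dropWhile_id)
qed

lemma length_lr: "w \<noteq> [] \<Longrightarrow> length w = length (lft w) + Suc (length (rgt w))"
  using arg_cong[OF split_lr, of w length] by simp
lemma length_lft: "w \<noteq> [] \<Longrightarrow> length (lft w) < length w"
  using length_lr[of w] by simp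
lemma length_rgt: "w \<noteq> [] \<Longrightarrow> length (rgt w) < length w"
  using length_lr[of w] by simp

lemma lr_of:
  assumes "m \<notin> set xs" "\<forall>x\<in>set (xs @ m # ys). x \<le> m"
  shows "lft (xs @ m # ys) = xs \<and> rgt (xs @ m # ys) = ys"
proof -
  have M: "Max (set (xs @ m # ys)) = m" using assms by (intro Max_eqI) auto
  have "\<forall>x\<in>set xs. x \<noteq> m" using assms by auto
  then show ?thesis unfolding lft_def rgt_def M
    by (simp add: takeWhile_append2 dropWhile_append2)
qed

lemma decomp:
  assumes "isperm n w" "w \<noteq> []"
  shows "w = lft w @ n # rgt w \<and> distinct (lft w) \<and> distinct (rgt w) \<and> set (lft w) \<inter> set (rgt w) = {}
     \<and> set (lft w) \<union> set (rgt w) = {1..<n} \<and> length (lft w) + length (rgt w) + 1 = n \<and> n \<notin> set (lft w) \<and> n \<notin> set (rgt w)"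
proof -
  have n1: "n \<ge> 1" using assms unfolding isperm_def by (cases n) auto
  have "Max {1..n} = n" using n1 by (intro Max_eqI) auto
  then have M: "Max (set w) = n" using assms unfolding isperm_def by simp
  have w: "w = lft w @ n # rgt w" using split_lr[OF assms(2)] M by simp
  have d: "distinct w" using assms unfolding isperm_def by simp
  have s: "set w = {1..n}" using assms unfolding isperm_def by simp
  have L: "length w = n" using isperm_length[OF assms(1)] .
  from d w have d2: "distinct (lft w @ n # rgt w)" by simp
  then have "n \<notin> set (lft w)" "n \<notin> set (rgt w)" "distinct (lft w)" "distinct (rgt w)" "set (lft w) \<inter> set (rgt w) = {}"
    by auto
  moreover have "set (lft w) \<union> set (rgt w) = {1..<n}"
  proof -
    have "set (lft w) \<union> set (rgt w) \<union> {n} = {1..n}" using s w by (metis Un_insert_right set_append set_simps(2) sup_bot.right_neutral Un_insert_left insert_commute)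
    then have "set (lft w) \<union> set (rgt w) = {1..n} - {n}" using calculation by blast
    moreover have "{1..n} - {n} = {1..<n::nat}" by auto
    ultimately show ?thesis by simp
  qed
  moreover have "length (lft w) + length (rgt w) + 1 = n" using L arg_cong[OF w, of length] by simp
  ultimately show ?thesis using w by simp
qed



lemma join_perm1:
  assumes "isperm k L" "isperm t R" "n = k + t + 1"
  shows "isperm n (L @ n # map (\<lambda>x. x + k) R)"
proof -
  have sR: "set (map (\<lambda>x. x + k) R) = {k+1..k+t}" using assms(2) unfolding isperm_def
    by (simp add: add.commute)
  have sL: "set L = {1..k}" using assms(1) unfolding isperm_def by simp
  have d: "distinct (map (\<lambda>x. x + k) R)" using assms(2) unfolding isperm_def by (simp add: distinct_map)
  show ?thesis unfolding isperm_def using sR sL d assms by (auto simp: isperm_def)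
qed

lemma join_perm2:
  assumes "isperm k L" "isperm t R" "n = k + t + 1"
  shows "isperm n (map (\<lambda>x. x + t) L @ n # R)"
proof -
  have sL: "set (map (\<lambda>x. x + t) L) = {t+1..t+k}" using assms(1) unfolding isperm_def
    by (simp add: add.commute)
  have sR: "set R = {1..t}" using assms(2) unfolding isperm_def by simp
  have d: "distinct (map (\<lambda>x. x + t) L)" using assms(1) unfolding isperm_def by (simp add: distinct_map)
  show ?thesis unfolding isperm_def using sR sL d assms by (auto simp: isperm_def)
qed

lemma downclosed:
  assumes f: "finite B" and pos: "\<forall>y\<in>B. 1 \<le> y" and dc: "\<forall>y\<in>B. \<forall>x. 1 \<le> x \<longrightarrow> x < y \<longrightarrow> x \<in> B"
  shows "B = {1..card B}"
proof (intro set_eqI iffI)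
  fix x assume x: "x \<in> B"
  have "{1..x} \<subseteq> B"
  proof
    fix z assume z: "z \<in> {1..x}"
    show "z \<in> B"
    proof (cases "z = x")
      case True then show ?thesis using x by simp
    next
      case False then have "z < x" using z by simp
      then show ?thesis using dc x z by simp
    qed
  qed
  then have "card {1..x} \<le> card B" by (rule card_mono[OF f])
  then have "x \<le> card B" by simp
  then show "x \<in> {1..card B}" using pos x by simp
next
  fix x assume x: "x \<in> {1..card B}"
  show "x \<in> B"
  proof (rule ccontr)
    assume nx: "x \<notin> B"
    have "B \<subseteq> {1..<x}"
    proof
      fix y assume y: "y \<in> B"
      have "\<not> x < y"
      proof
        assume "x < y" then have "x \<in> B" using dc y x by simp
        then show False using nx by simp
      qed
      moreover have "y \<noteq> x" using y nx by blast
      moreover have "1 \<le> y" using pos y by blast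
      ultimately show "y \<in> {1..<x}" by simp
    qed
    then have "card B \<le> card {1..<x}" by (intro card_mono) auto
    then have "card B \<le> x - 1" by simp
    then show False using x by auto
  qed
qed

function G :: "bool \<Rightarrow> nat list \<Rightarrow> nat list" where
  "G b w = (if w = [] then [] else
     if b then G b (std (lft w)) @ length w # map (\<lambda>x. x + length (lft w)) (G b (std (rgt w)))
     else map (\<lambda>x. x + length (rgt w)) (G b (std (lft w))) @ length w # G b (std (rgt w)))"
  by pat_completeness auto
termination
  by (relation "measure (\<lambda>(b,w). length w)") (auto simp: length_lft length_rgt)

declare G.simps[simp del]

lemma G_Nil[simp]: "G b [] = []"
  by (subst G.simps) simp

lemma G_True: "w \<noteq> [] \<Longrightarrow> G True w = G True (std (lft w)) @ length w # map (\<lambda>x. x + length (lft w)) (G True (std (rgt w)))"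
  by (subst G.simps) simp

lemma G_False: "w \<noteq> [] \<Longrightarrow> G False w = map (\<lambda>x. x + length (rgt w)) (G False (std (lft w))) @ length w # G False (std (rgt w))"
  by (subst G.simps) simp


lemma std_asc: "asc (std xs) = asc xs"
  unfolding std_def by (rule asc_map[OF std_ord])
lemma std_P132: "P132 (std xs) = P132 xs"
  unfolding std_def by (rule P132_map[OF std_ord])
lemma std_P231: "P231 (std xs) = P231 xs"
  unfolding std_def by (rule P231_map[OF std_ord])

lemma dec2:
  assumes "isperm n w" "w \<noteq> []"
  shows "w = lft w @ n # rgt w" "isperm (length (lft w)) (std (lft w))" "isperm (length (rgt w)) (std (rgt w))"
    "length (lft w) < n" "length (rgt w) < n" "n = length (lft w) + length (rgt w) + 1"
    "\<forall>x\<in>set (lft w). x < n" "\<forall>x\<in>set (rgt w). x < n"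
    "set (lft w) \<union> set (rgt w) = {1..<n}" "set (lft w) \<inter> set (rgt w) = {}"
    "distinct (lft w)" "distinct (rgt w)"
  using decomp[OF assms] std_perm by auto

lemma isperm_bound: "isperm k L \<Longrightarrow> \<forall>x\<in>set L. 1 \<le> x \<and> x \<le> k"
  unfolding isperm_def by auto

lemma G_True_props:
  "isperm n w \<Longrightarrow> isperm n (G True w) \<and> asc (G True w) = asc w \<and> \<not> P231 (G True w)"
proof (induction n arbitrary: w rule: less_induct)
  case (less n)
  show ?case
  proof (cases "w = []")
    case True
    then show ?thesis using less.prems by (simp add: P231_def)
  next
    case False
    note D = dec2[OF less.prems False]
    define \<alpha> where "\<alpha> = lft w"
    define \<beta> where "\<beta> = rgt w"
    define k where "k = length \<alpha>"
    define t where "t = length \<beta>"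
    define L where "L = G True (std \<alpha>)"
    define R where "R = G True (std \<beta>)"
    have IA: "isperm k L \<and> asc L = asc \<alpha> \<and> \<not> P231 L"
      using less.IH[OF D(4) D(2)] unfolding L_def k_def \<alpha>_def by (simp add: std_asc)
    have IB: "isperm t R \<and> asc R = asc \<beta> \<and> \<not> P231 R"
      using less.IH[OF D(5) D(3)] unfolding R_def t_def \<beta>_def by (simp add: std_asc)
    have n: "n = k + t + 1" using D(6) unfolding k_def t_def \<alpha>_def \<beta>_def .
    have lw: "length w = n" using isperm_length[OF less.prems] .
    have Gw: "G True w = L @ n # map (\<lambda>x. x + k) R"
      using G_True[OF False] lw unfolding L_def R_def k_def \<alpha>_def \<beta>_def by simp
    have bL: "\<forall>x\<in>set L. x < n" using isperm_bound[of k L] IA n by fastforce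
    have bR: "\<forall>x\<in>set (map (\<lambda>x. x + k) R). x < n" using isperm_bound[of t R] IB n by fastforce
    have sep: "\<forall>a\<in>set L. \<forall>b\<in>set (map (\<lambda>x. x + k) R). a < b"
      using isperm_bound[of t R] isperm_bound[of k L] IA IB by fastforce
    have perm: "isperm n (G True w)" unfolding Gw using join_perm1[OF conjunct1[OF IA] conjunct1[OF IB] n] .
    have lenL: "length L = k" using isperm_length IA by blast
    have lenR: "length R = t" using isperm_length IB by blast
    have w: "w = \<alpha> @ n # \<beta>" using D(1) unfolding \<alpha>_def \<beta>_def .
    have ascw: "asc w = (if \<alpha> = [] then [] else asc \<alpha> @ [True]) @ (if \<beta> = [] then [] else False # asc \<beta>)"
      using asc_split[of \<alpha> n \<beta>] D(7,8) w unfolding \<alpha>_def \<beta>_def by simp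
    have "asc (map (\<lambda>x. x + k) R) = asc R" by (rule asc_map) simp
    then have ascG: "asc (G True w) = (if L = [] then [] else asc L @ [True]) @ (if R = [] then [] else False # asc R)"
      unfolding Gw using asc_split[OF bL bR] by simp
    have "(L = []) = (\<alpha> = [])" "(R = []) = (\<beta> = [])"
      using lenL lenR k_def t_def by auto
    then have asc: "asc (G True w) = asc w" using ascG ascw IA IB by simp
    have "P231 (map (\<lambda>x. x + k) R) = P231 R" by (rule P231_map) simp
    then have "\<not> P231 (G True w)" unfolding Gw using S231[OF bL bR] IA IB sep
      by (meson not_less_iff_gr_or_eq order.asym)
    then show ?thesis using perm asc by simp
  qed
qed

lemma G_False_props:
  "isperm n w \<Longrightarrow> isperm n (G False w) \<and> asc (G False w) = asc w \<and> \<not> P132 (G False w)"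
proof (induction n arbitrary: w rule: less_induct)
  case (less n)
  show ?case
  proof (cases "w = []")
    case True
    then show ?thesis using less.prems by (simp add: P132_def)
  next
    case False
    note D = dec2[OF less.prems False]
    define \<alpha> where "\<alpha> = lft w"
    define \<beta> where "\<beta> = rgt w"
    define k where "k = length \<alpha>"
    define t where "t = length \<beta>"
    define L where "L = G False (std \<alpha>)"
    define R where "R = G False (std \<beta>)"
    have IA: "isperm k L \<and> asc L = asc \<alpha> \<and> \<not> P132 L"
      using less.IH[OF D(4) D(2)] unfolding L_def k_def \<alpha>_def by (simp add: std_asc)
    have IB: "isperm t R \<and> asc R = asc \<beta> \<and> \<not> P132 R"
      using less.IH[OF D(5) D(3)] unfolding R_def t_def \<beta>_def by (simp add: std_asc)
    have n: "n = k + t + 1" using D(6) unfolding k_def t_def \<alpha>_def \<beta>_def .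
    have lw: "length w = n" using isperm_length[OF less.prems] .
    have Gw: "G False w = map (\<lambda>x. x + t) L @ n # R"
      using G_False[OF False] lw unfolding L_def R_def t_def \<alpha>_def \<beta>_def by simp
    have bL: "\<forall>x\<in>set (map (\<lambda>x. x + t) L). x < n" using isperm_bound[of k L] IA n by fastforce
    have bR: "\<forall>x\<in>set R. x < n" using isperm_bound[of t R] IB n by fastforce
    have sep: "\<forall>a\<in>set (map (\<lambda>x. x + t) L). \<forall>b\<in>set R. b < a"
      using isperm_bound[of t R] isperm_bound[of k L] IA IB by fastforce
    have perm: "isperm n (G False w)" unfolding Gw using join_perm2[OF conjunct1[OF IA] conjunct1[OF IB] n] .
    have lenL: "length L = k" using isperm_length IA by blast
    have lenR: "length R = t" using isperm_length IB by blast
    have w: "w = \<alpha> @ n # \<beta>" using D(1) unfolding \<alpha>_def \<beta>_def .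
    have ascw: "asc w = (if \<alpha> = [] then [] else asc \<alpha> @ [True]) @ (if \<beta> = [] then [] else False # asc \<beta>)"
      using asc_split[of \<alpha> n \<beta>] D(7,8) w unfolding \<alpha>_def \<beta>_def by simp
    have "asc (map (\<lambda>x. x + t) L) = asc L" by (rule asc_map) simp
    then have ascG: "asc (G False w) = (if L = [] then [] else asc L @ [True]) @ (if R = [] then [] else False # asc R)"
      unfolding Gw using asc_split[OF bL bR] by simp
    have "(L = []) = (\<alpha> = [])" "(R = []) = (\<beta> = [])"
      using lenL lenR k_def t_def by auto
    then have asc: "asc (G False w) = asc w" using ascG ascw IA IB by simp
    have "P132 (map (\<lambda>x. x + t) L) = P132 L" by (rule P132_map) simp
    then have "\<not> P132 (G False w)" unfolding Gw using S132[OF bL bR] IA IB sep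
      by (meson not_less_iff_gr_or_eq order.asym)
    then show ?thesis using perm asc by simp
  qed
qed


lemma G_inv1:
  "isperm n w \<Longrightarrow> \<not> P132 w \<Longrightarrow> G False (G True w) = w"
proof (induction n arbitrary: w rule: less_induct)
  case (less n)
  show ?case
  proof (cases "w = []")
    case True
    then show ?thesis by simp
  next
    case False
    note D = dec2[OF less.prems(1) False]
    define \<alpha> where "\<alpha> = lft w"
    define \<beta> where "\<beta> = rgt w"
    define k where "k = length \<alpha>"
    define t where "t = length \<beta>"
    define L where "L = G True (std \<alpha>)"
    define R where "R = G True (std \<beta>)"
    have n: "n = k + t + 1" using D(6) unfolding k_def t_def \<alpha>_def \<beta>_def .
    have lw: "length w = n" using isperm_length[OF less.prems(1)] .
    have w: "w = \<alpha> @ n # \<beta>" using D(1) unfolding \<alpha>_def \<beta>_def .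
    have bA: "\<forall>x\<in>set \<alpha>. x < n" and bB: "\<forall>x\<in>set \<beta>. x < n" using D(7,8) unfolding \<alpha>_def \<beta>_def by auto
    have av: "\<not> P132 \<alpha>" "\<not> P132 \<beta>" "\<forall>a\<in>set \<alpha>. \<forall>b\<in>set \<beta>. \<not> a < b"
      using less.prems(2) S132[OF bA bB] w by auto
    have U: "set \<alpha> \<union> set \<beta> = {1..<n}" and I: "set \<alpha> \<inter> set \<beta> = {}"
      using D(9,10) unfolding \<alpha>_def \<beta>_def by auto
    have "set \<beta> = {1..card (set \<beta>)}"
    proof (rule downclosed)
      show "\<forall>y\<in>set \<beta>. 1 \<le> y" using U by auto
      show "\<forall>y\<in>set \<beta>. \<forall>x. 1 \<le> x \<longrightarrow> x < y \<longrightarrow> x \<in> set \<beta>"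
      proof (intro ballI allI impI)
        fix y x assume y: "y \<in> set \<beta>" and x: "1 \<le> x" "x < y"
        have "y < n" using bB y by auto
        then have "x \<in> set \<alpha> \<union> set \<beta>" using U x by auto
        then show "x \<in> set \<beta>" using av(3) y x by auto
      qed
    qed simp
    then have sB: "set \<beta> = {1..t}" using D(12) unfolding t_def \<beta>_def by (simp add: distinct_card)
    have sA: "set \<alpha> = {t+1..t+k}"
    proof -
      have "set \<alpha> = {1..<n} - set \<beta>" using U I by blast
      then show ?thesis using sB n by auto
    qed
    have stdB: "std \<beta> = \<beta>" using std_shift[of \<beta> 0 t] sB by simp
    have stdA: "std \<alpha> = map (\<lambda>x. x - t) \<alpha>" using std_shift[OF sA] .
    have pA: "isperm k (std \<alpha>)" using D(2) unfolding k_def \<alpha>_def .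
    have pB: "isperm t (std \<beta>)" using D(3) unfolding t_def \<beta>_def .
    have IA: "G False L = std \<alpha>"
      using less.IH[OF _ pA] D(4) av(1) unfolding L_def k_def \<alpha>_def by (simp add: std_P132)
    have IB: "G False R = std \<beta>"
      using less.IH[OF _ pB] D(5) av(2) unfolding R_def t_def \<beta>_def by (simp add: std_P132)
    have PL: "isperm k L" using G_True_props[OF pA] unfolding L_def by simp
    have PR: "isperm t R" using G_True_props[OF pB] unfolding R_def by simp
    have Gw: "G True w = L @ n # map (\<lambda>x. x + k) R"
      using G_True[OF False] lw unfolding L_def R_def k_def \<alpha>_def \<beta>_def by simp
    have pv: "isperm n (G True w)" using G_True_props[OF less.prems(1)] by simp
    have nL: "n \<notin> set L" using isperm_bound[OF PL] n by fastforce
    have le: "\<forall>x\<in>set (L @ n # map (\<lambda>x. x + k) R). x \<le> n" using pv unfolding Gw isperm_def by auto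
    note lr = lr_of[OF nL le]
    have ne: "G True w \<noteq> []" unfolding Gw by simp
    have lv: "length (G True w) = n" using isperm_length[OF pv] .
    have sL: "std L = L" using std_id[OF PL] .
    have sX: "set (map (\<lambda>x. x + k) R) = {k+1..k+t}" using PR unfolding isperm_def by (simp add: add.commute)
    have sR: "std (map (\<lambda>x. x + k) R) = R" using std_shift[OF sX] by (simp add: comp_def)
    have "G False (G True w) = map (\<lambda>x. x + t) (G False L) @ n # G False R"
      using G_False[OF ne] lv lr sL sR PR isperm_length unfolding Gw by (metis length_map)
    also have "\<dots> = map (\<lambda>x. x + t) (map (\<lambda>x. x - t) \<alpha>) @ n # \<beta>" using IA IB stdA stdB by simp
    also have "map (\<lambda>x. x + t) (map (\<lambda>x. x - t) \<alpha>) = \<alpha>" unfolding map_map comp_def using sA by (intro map_idI) auto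
    finally show ?thesis using w by simp
  qed
qed

lemma G_inv2:
  "isperm n w \<Longrightarrow> \<not> P231 w \<Longrightarrow> G True (G False w) = w"
proof (induction n arbitrary: w rule: less_induct)
  case (less n)
  show ?case
  proof (cases "w = []")
    case True
    then show ?thesis by simp
  next
    case False
    note D = dec2[OF less.prems(1) False]
    define \<alpha> where "\<alpha> = lft w"
    define \<beta> where "\<beta> = rgt w"
    define k where "k = length \<alpha>"
    define t where "t = length \<beta>"
    define L where "L = G False (std \<alpha>)"
    define R where "R = G False (std \<beta>)"
    have n: "n = k + t + 1" using D(6) unfolding k_def t_def \<alpha>_def \<beta>_def .
    have lw: "length w = n" using isperm_length[OF less.prems(1)] .
    have w: "w = \<alpha> @ n # \<beta>" using D(1) unfolding \<alpha>_def \<beta>_def .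
    have bA: "\<forall>x\<in>set \<alpha>. x < n" and bB: "\<forall>x\<in>set \<beta>. x < n" using D(7,8) unfolding \<alpha>_def \<beta>_def by auto
    have av: "\<not> P231 \<alpha>" "\<not> P231 \<beta>" "\<forall>a\<in>set \<alpha>. \<forall>b\<in>set \<beta>. \<not> b < a"
      using less.prems(2) S231[OF bA bB] w by auto
    have U: "set \<alpha> \<union> set \<beta> = {1..<n}" and I: "set \<alpha> \<inter> set \<beta> = {}"
      using D(9,10) unfolding \<alpha>_def \<beta>_def by auto
    have "set \<alpha> = {1..card (set \<alpha>)}"
    proof (rule downclosed)
      show "\<forall>y\<in>set \<alpha>. 1 \<le> y" using U by auto
      show "\<forall>y\<in>set \<alpha>. \<forall>x. 1 \<le> x \<longrightarrow> x < y \<longrightarrow> x \<in> set \<alpha>"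
      proof (intro ballI allI impI)
        fix y x assume y: "y \<in> set \<alpha>" and x: "1 \<le> x" "x < y"
        have "y < n" using bA y by auto
        then have "x \<in> set \<alpha> \<union> set \<beta>" using U x by auto
        then show "x \<in> set \<alpha>" using av(3) y x by auto
      qed
    qed simp
    then have sA: "set \<alpha> = {1..k}" using D(11) unfolding k_def \<alpha>_def by (simp add: distinct_card)
    have sB: "set \<beta> = {k+1..k+t}"
    proof -
      have "set \<beta> = {1..<n} - set \<alpha>" using U I by blast
      then show ?thesis using sA n by auto
    qed
    have stdA: "std \<alpha> = \<alpha>" using std_shift[of \<alpha> 0 k] sA by simp
    have stdB: "std \<beta> = map (\<lambda>x. x - k) \<beta>" using std_shift[OF sB] .
    have pA: "isperm k (std \<alpha>)" using D(2) unfolding k_def \<alpha>_def .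
    have pB: "isperm t (std \<beta>)" using D(3) unfolding t_def \<beta>_def .
    have IA: "G True L = std \<alpha>"
      using less.IH[OF _ pA] D(4) av(1) unfolding L_def k_def \<alpha>_def by (simp add: std_P231)
    have IB: "G True R = std \<beta>"
      using less.IH[OF _ pB] D(5) av(2) unfolding R_def t_def \<beta>_def by (simp add: std_P231)
    have PL: "isperm k L" using G_False_props[OF pA] unfolding L_def by simp
    have PR: "isperm t R" using G_False_props[OF pB] unfolding R_def by simp
    have Gw: "G False w = map (\<lambda>x. x + t) L @ n # R"
      using G_False[OF False] lw unfolding L_def R_def t_def \<alpha>_def \<beta>_def by simp
    have pv: "isperm n (G False w)" using G_False_props[OF less.prems(1)] by simp
    have nL: "n \<notin> set (map (\<lambda>x. x + t) L)" using isperm_bound[OF PL] n by fastforce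
    have le: "\<forall>x\<in>set (map (\<lambda>x. x + t) L @ n # R). x \<le> n" using pv unfolding Gw isperm_def by auto
    note lr = lr_of[OF nL le]
    have ne: "G False w \<noteq> []" unfolding Gw by simp
    have lv: "length (G False w) = n" using isperm_length[OF pv] .
    have sR: "std R = R" using std_id[OF PR] .
    have sX: "set (map (\<lambda>x. x + t) L) = {t+1..t+k}" using PL unfolding isperm_def by (simp add: add.commute)
    have sL: "std (map (\<lambda>x. x + t) L) = L" using std_shift[OF sX] by (simp add: comp_def)
    have "G True (G False w) = G True L @ n # map (\<lambda>x. x + k) (G True R)"
      using G_True[OF ne] lv lr sL sR PL isperm_length unfolding Gw by (metis length_map)
    also have "\<dots> = \<alpha> @ n # map (\<lambda>x. x + k) (map (\<lambda>x. x - k) \<beta>)" using IA IB stdA stdB by simp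
    also have "map (\<lambda>x. x + k) (map (\<lambda>x. x - k) \<beta>) = \<beta>" unfolding map_map comp_def using sB by (intro map_idI) auto
    finally show ?thesis using w by simp
  qed
qed



definition cpl :: "nat \<Rightarrow> nat list \<Rightarrow> nat list" where
  "cpl n w = map (\<lambda>x. Suc n - x) w"

lemma cpl_perm: assumes "isperm n w" shows "isperm n (cpl n w)"
proof -
  have s: "set w = {1..n}" and d: "distinct w" using assms unfolding isperm_def by auto
  have "inj_on (\<lambda>x. Suc n - x) (set w)" using s by (intro inj_onI) auto
  then have d2: "distinct (cpl n w)" unfolding cpl_def using d by (simp add: distinct_map)
  have "(\<lambda>x. Suc n - x) ` {1..n} = {1..n}"
  proof (intro set_eqI iffI)
    fix y assume "y \<in> {1..n}"
    then have "y = Suc n - (Suc n - y)" "Suc n - y \<in> {1..n}" by auto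
    then show "y \<in> (\<lambda>x. Suc n - x) ` {1..n}" by blast
  qed auto
  then show ?thesis unfolding isperm_def cpl_def using d2 s by (simp add: cpl_def)
qed

lemma cpl_cpl: "isperm n w \<Longrightarrow> cpl n (cpl n w) = w"
  unfolding cpl_def isperm_def map_map comp_def by (intro map_idI) auto

lemma cpl_ord: "isperm n w \<Longrightarrow> \<forall>x\<in>set w. \<forall>y\<in>set w. (Suc n - x < Suc n - y) = (y < x)"
  unfolding isperm_def by auto

lemma cpl_P231: "isperm n w \<Longrightarrow> P231 (cpl n w) = P213 w"
  unfolding cpl_def by (rule P231_rev[OF cpl_ord])
lemma cpl_P312: "isperm n w \<Longrightarrow> P312 (cpl n w) = P132 w"
  unfolding cpl_def by (rule P312_rev[OF cpl_ord])
lemma cpl_asc: "isperm n w \<Longrightarrow> asc (cpl n w) = map Not (asc w)"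
  unfolding cpl_def by (rule asc_rev) (auto simp: isperm_def)


lemma blocks_props:
  fixes f :: "nat \<Rightarrow> nat" and xs ss :: "nat list"
  assumes xs: "sorted_wrt (<) xs" and ss: "sorted_wrt (<) ss"
  shows "distinct (concat (map (\<lambda>s. filter (\<lambda>j. f j = s) xs) ss))
    \<and> set (concat (map (\<lambda>s. filter (\<lambda>j. f j = s) xs) ss)) = {j\<in>set xs. f j \<in> set ss}
    \<and> sorted (map (\<lambda>j. (f j, j)) (concat (map (\<lambda>s. filter (\<lambda>j. f j = s) xs) ss)))"
  using ss
proof (induction ss)
  case Nil then show ?case by simp
next
  case (Cons s ss)
  let ?C = "concat (map (\<lambda>s. filter (\<lambda>j. f j = s) xs) ss)"
  let ?F = "filter (\<lambda>j. f j = s) xs"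
  have IH: "distinct ?C \<and> set ?C = {j\<in>set xs. f j \<in> set ss} \<and> sorted (map (\<lambda>j. (f j, j)) ?C)"
    using Cons by simp
  have lt: "\<forall>x\<in>set ss. s < x" using Cons.prems by simp
  have dx: "distinct xs" using xs by (simp add: strict_sorted_iff)
  have sF: "sorted_wrt (<) ?F" using xs by (simp add: sorted_wrt_filter)
  have "sorted_wrt (\<lambda>x y. (f x, x) \<le> (f y, y)) ?F"
    using sF by (rule sorted_wrt_mono_rel[rotated]) (auto simp: less_eq_prod_def)
  then have s1: "sorted (map (\<lambda>j. (f j, j)) ?F)" by (simp add: sorted_map)
  have cross: "\<forall>x\<in>set ?F. \<forall>y\<in>set ?C. (f x, x) \<le> (f y, y)"
    using IH lt by (auto simp: less_eq_prod_def)
  have "sorted (map (\<lambda>j. (f j, j)) (?F @ ?C))"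
    using s1 IH cross by (auto simp: sorted_append)
  moreover have "distinct (?F @ ?C)" using IH dx lt by auto
  moreover have "set (?F @ ?C) = {j\<in>set xs. f j \<in> set (s#ss)}" using IH by auto
  ultimately show ?case by simp
qed

lemma pf_perm_char:
  assumes "is_parking_function n p"
  shows "isperm n (pf_perm p) \<and> sorted (map (\<lambda>j. (p!(j-1), j)) (pf_perm p))"
proof -
  have lp: "length p = n" and sp: "set p \<subseteq> {1..n}" using assms unfolding is_parking_function_def by auto
  have srt: "sorted_wrt (<) [1..<n+1]" by (simp add: strict_sorted_iff del: upt_Suc)
  note B = blocks_props[OF srt srt, of "\<lambda>j. p!(j-1)"]
  have "{j \<in> set [1..<n+1]. p!(j-1) \<in> set [1..<n+1]} = {1..n}"
  proof -
    have "p!(j-1) \<in> {1..n}" if j: "j \<in> {1..n}" for j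
    proof -
      have "j - 1 < length p" using j lp by auto
      then have "p!(j-1) \<in> set p" by (rule nth_mem)
      then show ?thesis using sp by blast
    qed
    moreover have S: "set [1..<n+1] = {1..n}" by (auto simp del: upt_Suc)
    ultimately show ?thesis unfolding S by blast
  qed
  then show ?thesis using B unfolding pf_perm_def isperm_def lp by simp
qed

lemma sorted_key_unique:
  assumes "isperm n a" "isperm n b" "sorted (map k a)" "sorted (map k b)" "inj k"
  shows "a = b"
proof -
  have "map k a = map k b"
    using assms by (intro sorted_distinct_set_unique) (auto simp: isperm_def distinct_map inj_on_def)
  then show ?thesis using assms(5) by simp
qed

lemma pf_perm_eq:
  assumes "is_parking_function n p" "isperm n \<pi>" "sorted (map (\<lambda>j. (p!(j-1), j)) \<pi>)"
  shows "pf_perm p = \<pi>"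
  using sorted_key_unique[OF conjunct1[OF pf_perm_char[OF assms(1)]] assms(2) conjunct2[OF pf_perm_char[OF assms(1)]] assms(3)]
  by (auto simp: inj_def)

definition idx :: "nat list \<Rightarrow> nat \<Rightarrow> nat" where
  "idx xs x = length (takeWhile (\<lambda>y. y \<noteq> x) xs)"

lemma idx_nth: "distinct xs \<Longrightarrow> i < length xs \<Longrightarrow> idx xs (xs!i) = i"
proof (induction xs arbitrary: i)
  case Nil then show ?case by simp
next
  case (Cons a xs)
  show ?case
  proof (cases i)
    case 0 then show ?thesis by (simp add: idx_def)
  next
    case (Suc i')
    then have "xs!i' \<noteq> a" using Cons.prems by (metis distinct.simps(2) length_Cons nth_mem Suc_less_SucD)
    then show ?thesis using Cons Suc by (simp add: idx_def)
  qed
qed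

definition Tr :: "nat list \<Rightarrow> nat list \<Rightarrow> nat list \<Rightarrow> nat list" where
  "Tr p \<pi> \<pi>' = map (\<lambda>j. p ! (\<pi> ! idx \<pi>' j - 1)) [1..<length p + 1]"

lemma Tr_len[simp]: "length (Tr p \<pi> \<pi>') = length p"
  by (simp add: Tr_def del: upt_Suc)

lemma perm_nth_range: "isperm n \<pi> \<Longrightarrow> i < n \<Longrightarrow> 1 \<le> \<pi>!i \<and> \<pi>!i \<le> n"
  unfolding isperm_def using isperm_length[of n \<pi>] by (metis atLeastAtMost_iff isperm_def nth_mem)

lemma Tr_nth:
  assumes "isperm n \<pi>'" "length p = n" "i < n"
  shows "Tr p \<pi> \<pi>' ! (\<pi>'!i - 1) = p ! (\<pi>!i - 1)"
proof -
  have r: "1 \<le> \<pi>'!i" "\<pi>'!i \<le> n" using perm_nth_range[OF assms(1,3)] by auto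
  have "idx \<pi>' (\<pi>'!i) = i" using assms isperm_length[OF assms(1)] by (intro idx_nth) (auto simp: isperm_def)
  moreover have "[1..<n+1] ! (\<pi>'!i - 1) = \<pi>'!i" using r by (subst nth_upt) auto
  ultimately show ?thesis unfolding Tr_def using r assms(2) by (simp del: upt_Suc)
qed

lemma eq_via_perm:
  assumes "isperm n \<pi>" "length a = n" "length b = n" "\<forall>i<n. a!(\<pi>!i - 1) = b!(\<pi>!i - 1)"
  shows "a = b"
proof (rule nth_equalityI)
  show "length a = length b" using assms by simp
  fix t assume t: "t < length a"
  have "Suc t \<in> set \<pi>" using assms(1,2) t unfolding isperm_def by auto
  then obtain i where i: "i < length \<pi>" "\<pi>!i = Suc t" by (metis in_set_conv_nth)
  then show "a!t = b!t" using assms(4) isperm_length[OF assms(1)] by force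
qed

lemma mset_perm_map:
  assumes "isperm n \<pi>" "length p = n"
  shows "mset (map (\<lambda>j. p!(j-1)) \<pi>) = mset p"
proof -
  have "mset \<pi> = mset [1..<n+1]"
    using assms(1) mset_set_set[of \<pi>] mset_set_set[of "[1..<n+1]"] unfolding isperm_def
    by (metis atLeastLessThanSuc_atLeastAtMost distinct_upt set_upt Suc_eq_plus1)
  then have "mset (map (\<lambda>j. p!(j-1)) \<pi>) = mset (map (\<lambda>j. p!(j-1)) [1..<n+1])" by simp
  also have "map (\<lambda>j. p!(j-1)) [1..<n+1] = p" using assms(2) by (intro nth_equalityI) (auto simp del: upt_Suc)
  finally show ?thesis .
qed


lemma Tr_main:
  assumes pf: "is_parking_function n p" and pi: "\<pi> = pf_perm p"
    and p2: "isperm n \<pi>'" and as: "asc \<pi>' = asc \<pi>"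
  shows "is_parking_function n (Tr p \<pi> \<pi>') \<and> pf_perm (Tr p \<pi> \<pi>') = \<pi>'
     \<and> (\<forall>i<n. Tr p \<pi> \<pi>' ! (\<pi>'!i - 1) = p!(\<pi>!i - 1))"
proof -
  define q where "q = Tr p \<pi> \<pi>'"
  have lp: "length p = n" using pf unfolding is_parking_function_def by simp
  have lq: "length q = n" unfolding q_def using lp by simp
  have P1: "isperm n \<pi>" and S1: "sorted (map (\<lambda>j. (p!(j-1), j)) \<pi>)" using pf_perm_char[OF pf] pi by auto
  have l1: "length \<pi> = n" using isperm_length[OF P1] .
  have l2: "length \<pi>'= n" using isperm_length[OF p2] .
  have qn: "\<forall>i<n. q ! (\<pi>'!i - 1) = p!(\<pi>!i - 1)" unfolding q_def using Tr_nth[OF p2 lp] by simp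
  have "map (\<lambda>j. q!(j-1)) \<pi>' = map (\<lambda>j. p!(j-1)) \<pi>"
    using qn l1 l2 by (intro nth_equalityI) auto
  then have ms: "mset q = mset p" using mset_perm_map[OF p2 lq] mset_perm_map[OF P1 lp] by simp
  have "set q = set p" using ms by (metis set_mset_mset)
  moreover have "sort q = sort p" using ms by (metis sorted_list_of_multiset_mset)
  ultimately have pfq: "is_parking_function n q" using pf lq unfolding is_parking_function_def by simp
  have "sorted (map (\<lambda>j. (q!(j-1), j)) \<pi>')"
    unfolding sorted_iff_nth_Suc
  proof (intro allI impI)
    fix i assume i: "Suc i < length (map (\<lambda>j. (q!(j-1), j)) \<pi>')"
    then have i1: "Suc i < n" using l2 by simp
    have le: "(p!(\<pi>!i-1), \<pi>!i) \<le> (p!(\<pi>!Suc i-1), \<pi>!Suc i)"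
      using S1 i1 l1 unfolding sorted_iff_nth_Suc by fastforce
    have ne: "\<pi>!i \<noteq> \<pi>!Suc i" using P1 i1 l1 unfolding isperm_def by (simp add: nth_eq_iff_index_eq)
    have asi: "(\<pi>'!i < \<pi>'!Suc i) = (\<pi>!i < \<pi>!Suc i)"
      using as asc_nth[of i \<pi>] asc_nth[of i \<pi>'] i1 l1 l2 by metis
    show "map (\<lambda>j. (q!(j-1), j)) \<pi>' ! i \<le> map (\<lambda>j. (q!(j-1), j)) \<pi>' ! Suc i"
      using le ne asi qn i1 l2 by (auto simp: less_eq_prod_def)
  qed
  then have "pf_perm q = \<pi>'" by (rule pf_perm_eq[OF pfq p2])
  then show ?thesis using pfq qn unfolding q_def by simp
qed

lemma transfer_half:
  assumes F: "\<And>w. isperm n w \<Longrightarrow> \<not> contains3 w \<sigma> \<Longrightarrow> isperm n (f w) \<and> \<not> contains3 (f w) \<tau> \<and> g (f w) = w \<and> asc (f w) = asc w"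
    and pf: "is_parking_function n p" and av: "avoids (pf_perm p) \<sigma>"
  shows "is_parking_function n (Tr p (pf_perm p) (f (pf_perm p)))
    \<and> avoids (pf_perm (Tr p (pf_perm p) (f (pf_perm p)))) \<tau>
    \<and> Tr (Tr p (pf_perm p) (f (pf_perm p))) (pf_perm (Tr p (pf_perm p) (f (pf_perm p))))
          (g (pf_perm (Tr p (pf_perm p) (f (pf_perm p))))) = p"
proof -
  define \<pi> where "\<pi> = pf_perm p"
  define \<pi>' where "\<pi>' = f \<pi>"
  define q where "q = Tr p \<pi> \<pi>'"
  have P1: "isperm n \<pi>" using pf_perm_char[OF pf] unfolding \<pi>_def by simp
  have Fp: "isperm n \<pi>' \<and> \<not> contains3 \<pi>' \<tau> \<and> g \<pi>' = \<pi> \<and> asc \<pi>' = asc \<pi>"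
    using F[OF P1] av unfolding \<pi>'_def avoids_def \<pi>_def by simp
  have T1: "is_parking_function n q \<and> pf_perm q = \<pi>' \<and> (\<forall>i<n. q ! (\<pi>'!i - 1) = p!(\<pi>!i - 1))"
    unfolding q_def using Tr_main[OF pf \<pi>_def] Fp by simp
  have T2: "is_parking_function n (Tr q \<pi>' \<pi>) \<and> pf_perm (Tr q \<pi>' \<pi>) = \<pi> \<and> (\<forall>i<n. Tr q \<pi>' \<pi> ! (\<pi>!i - 1) = q!(\<pi>'!i - 1))"
    using Tr_main[of n q \<pi>' \<pi>] T1 Fp P1 by simp
  have lp: "length p = n" using pf unfolding is_parking_function_def by simp
  have lq: "length q = n" using T1 unfolding is_parking_function_def by simp
  have "Tr q \<pi>' \<pi> = p"
    using T1 T2 lp lq by (intro eq_via_perm[OF P1]) auto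
  then show ?thesis using T1 Fp unfolding q_def \<pi>'_def \<pi>_def avoids_def by simp
qed

lemma transfer:
  assumes F: "\<And>w. isperm n w \<Longrightarrow> \<not> contains3 w \<sigma> \<Longrightarrow> isperm n (f w) \<and> \<not> contains3 (f w) \<tau> \<and> g (f w) = w \<and> asc (f w) = asc w"
    and G: "\<And>w. isperm n w \<Longrightarrow> \<not> contains3 w \<tau> \<Longrightarrow> isperm n (g w) \<and> \<not> contains3 (g w) \<sigma> \<and> f (g w) = w \<and> asc (g w) = asc w"
  shows "pf_count n \<sigma> = pf_count n \<tau>"
proof -
  let ?A = "{p. is_parking_function n p \<and> avoids (pf_perm p) \<sigma>}"
  let ?B = "{p. is_parking_function n p \<and> avoids (pf_perm p) \<tau>}"
  let ?\<Phi> = "\<lambda>p. Tr p (pf_perm p) (f (pf_perm p))"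
  let ?\<Psi> = "\<lambda>p. Tr p (pf_perm p) (g (pf_perm p))"
  note H1 = transfer_half[of n \<sigma> f \<tau> g, OF F]
  note H2 = transfer_half[of n \<tau> g \<sigma> f, OF G]
  have "bij_betw ?\<Phi> ?A ?B"
  proof (rule bij_betw_byWitness[where f' = ?\<Psi>])
    show "?\<Phi> ` ?A \<subseteq> ?B" using H1 by auto
    show "?\<Psi> ` ?B \<subseteq> ?A" using H2 by auto
    show "\<forall>x\<in>?A. ?\<Psi> (?\<Phi> x) = x" using H1 by auto
    show "\<forall>y\<in>?B. ?\<Phi> (?\<Psi> y) = y" using H2 by auto
  qed
  then show ?thesis unfolding pf_count_def by (rule bij_betw_same_card)
qed

theorem proposition4p1:
  fixes n :: nat
  assumes "n \<ge> 1"
  shows "pf_count n [1,3,2] = pf_count n [2,3,1] \<and> pf_count n [2,1,3] = pf_count n [3,1,2]"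
proof
  show "pf_count n [1,3,2] = pf_count n [2,3,1]"
  proof (rule transfer[where f = "G True" and g = "G False"])
    fix w assume w: "isperm n w" "\<not> contains3 w [1,3,2]"
    have a: "\<not> P132 w" using w(2) unfolding c132 .
    show "isperm n (G True w) \<and> \<not> contains3 (G True w) [2,3,1] \<and> G False (G True w) = w \<and> asc (G True w) = asc w"
      unfolding c231 using G_True_props[OF w(1)] G_inv1[OF w(1) a] by simp
  next
    fix w assume w: "isperm n w" "\<not> contains3 w [2,3,1]"
    have a: "\<not> P231 w" using w(2) unfolding c231 .
    show "isperm n (G False w) \<and> \<not> contains3 (G False w) [1,3,2] \<and> G True (G False w) = w \<and> asc (G False w) = asc w"
      unfolding c132 using G_False_props[OF w(1)] G_inv2[OF w(1) a] by simp
  qed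
  show "pf_count n [2,1,3] = pf_count n [3,1,2]"
  proof (rule transfer[where f = "\<lambda>w. cpl n (G False (cpl n w))" and g = "\<lambda>w. cpl n (G True (cpl n w))"])
    fix w assume w: "isperm n w" "\<not> contains3 w [2,1,3]"
    define u where "u = cpl n w"
    have pu: "isperm n u" unfolding u_def using cpl_perm[OF w(1)] .
    have au: "\<not> P231 u" unfolding u_def using cpl_P231[OF w(1)] w(2) unfolding c213 by simp
    define v where "v = G False u"
    have V: "isperm n v \<and> asc v = asc u \<and> \<not> P132 v" unfolding v_def using G_False_props[OF pu] .
    have pv: "isperm n (cpl n v)" using cpl_perm V by blast
    have av: "\<not> contains3 (cpl n v) [3,1,2]" unfolding c312 using cpl_P312 V by simp
    have inv: "cpl n (G True (cpl n (cpl n v))) = w"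
      using cpl_cpl V G_inv2[OF pu au] cpl_cpl[OF w(1)] unfolding v_def u_def by simp
    have asc: "asc (cpl n v) = asc w"
      using cpl_asc[of n v] cpl_asc[OF w(1)] V unfolding u_def by (simp add: map_idI comp_def)
    show "isperm n (cpl n (G False (cpl n w))) \<and> \<not> contains3 (cpl n (G False (cpl n w))) [3,1,2]
      \<and> cpl n (G True (cpl n (cpl n (G False (cpl n w))))) = w \<and> asc (cpl n (G False (cpl n w))) = asc w"
      using pv av inv asc unfolding v_def u_def by simp
  next
    fix w assume w: "isperm n w" "\<not> contains3 w [3,1,2]"
    define u where "u = cpl n w"
    have pu: "isperm n u" unfolding u_def using cpl_perm[OF w(1)] .
    have au: "\<not> P132 u" using cpl_P312[OF pu] cpl_cpl[OF w(1)] w(2) unfolding u_def c312 by simp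
    define v where "v = G True u"
    have V: "isperm n v \<and> asc v = asc u \<and> \<not> P231 v" unfolding v_def using G_True_props[OF pu] .
    have pv: "isperm n (cpl n v)" using cpl_perm V by blast
    have av: "\<not> contains3 (cpl n v) [2,1,3]"
      unfolding c213 using cpl_P231[OF pv] cpl_cpl V by simp
    have inv: "cpl n (G False (cpl n (cpl n v))) = w"
      using cpl_cpl V G_inv1[OF pu au] cpl_cpl[OF w(1)] unfolding v_def u_def by simp
    have asc: "asc (cpl n v) = asc w"
      using cpl_asc[of n v] cpl_asc[OF w(1)] V unfolding u_def by (simp add: map_idI comp_def)
    show "isperm n (cpl n (G True (cpl n w))) \<and> \<not> contains3 (cpl n (G True (cpl n w))) [2,1,3]
      \<and> cpl n (G False (cpl n (cpl n (G True (cpl n w))))) = w \<and> asc (cpl n (G True (cpl n w))) = asc w"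
      using pv av inv asc unfolding v_def u_def by simp
  qed
qed

end
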